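(* Let $\mathcal{A}\in\mathbb{R}^{d_1\times\cdots\times d_k}$ be an order-$k$ real tensor. (a) If $\pi_1,\pi_2\in\mathcal{P}_{[k]}$ with $\pi_1\le\pi_2$ and $\mathcal{A}$ is $\pi_1$-OD, then $\mathcal{A}$ is $\pi_2$-OD. (b) If $\pi\in\mathcal{P}_{[k]}$, $\pi\ne\mathbf{1}_{[k]}$, and $\mathcal{A}$ is $\pi$-OD with a decomposition $\mathcal{A}=\sum_{n=1}^r\lambda_n\mathbf{a}^{(n)}_1\otimes\cdots\otimes\mathbf{a}^{(n)}_k$ as in the definition of $\pi$-OD, then $\|\mathrm{Unfold}_\pi(\mathcal{A})\|_\sigma=\lambda_1$.
   Context: $\mathcal{P}_{[k]}$ is the set of partitions of $[k]$, ordered by refinement: $\pi_1\le\pi_2$ if every block of $\pi_1$ is contained in a block of $\pi_2$; $\mathbf{1}_{[k]}=\{[k]\}$. $\mathcal{A}$ is called $\pi$-orthogonal decomposable ($\pi$-OD) if $\mathcal{A}=\sum_{n=1}^r\lambda_n\mathbf{a}^{(n)}_1\otimes\cdots\otimes\mathbf{a}^{(n)}_k$ with $\lambda_1\ge\lambda_2\ge\cdots\ge\lambda_r\ge0$ and vectors $\mathbf{a}^{(n)}_i\in\mathbb{R}^{d_i}$ satisfying $\langle\otimes_{i\in B}\mathbf{a}^{(n)}_i,\otimes_{i\in B}\mathbf{a}^{(m)}_i\rangle=\delta_{nm}$ for all $B\in\pi$ and all $n,m\in[r]$ (inner product = sum of entrywise products). For a real tensor $\mathcal{T}\in\mathbb{R}^{e_1\times\cdots\times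 e_m}$, $\|\mathcal{T}\|_\sigma=\sup\{\sum t_{i_1\dots i_m}x^{(1)}_{i_1}\cdots x^{(m)}_{i_m}:\ \|\mathbf{x}_n\|_2=1\}$. Unfolding: for $\pi=\{B_1,\dots,B_\ell\}$, $\mathrm{Unfold}_\pi(\mathcal{A})$ is the order-$\ell$ tensor of dimensions $(\prod_{j\in B_1}d_j,\dots,\prod_{j\in B_\ell}d_j)$ whose entry at $(m_1,\dots,m_\ell)$ is $a_{i_1\dots i_k}$, where $m_j$ corresponds to $(i_r)_{r\in B_j}$ under a fixed bijection $\prod_{r\in B_j}[d_r]\to[\prod_{r\in B_j}d_r]$. *)

theory Defs
  imports "HOL-Analysis.Analysis" "HOL-Library.Disjoint_Sets" "HOL-Library.FuncSet"
begin

text \<open>The index set [k] is rendered as {..<k} (0-based). A real tensor of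
order m with dimensions e 0, ..., e (m-1) is a function from index tuples to reals; only
its values on tidx m e (extensional functions i with i j < e j for j < m) matter.
A vector v in R^(d j) is a function nat => real, of which only entries 0..<d j matter.\<close>

definition tidx :: "nat \<Rightarrow> (nat \<Rightarrow> nat) \<Rightarrow> (nat \<Rightarrow> nat) set" where
  "tidx m e = PiE {..<m} (\<lambda>j. {..<e j})"

definition bidx :: "(nat \<Rightarrow> nat) \<Rightarrow> nat set \<Rightarrow> (nat \<Rightarrow> nat) set" where
  "bidx d B = PiE B (\<lambda>j. {..<d j})"

definition tprod :: "(nat \<Rightarrow> nat \<Rightarrow> real) \<Rightarrow> nat set \<Rightarrow> (nat \<Rightarrow> nat) \<Rightarrow> real" where
  "tprod v B = (\<lambda>i. \<Prod>j\<in>B. v j (i j))"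

definition tinner :: "(nat \<Rightarrow> nat) \<Rightarrow> nat set \<Rightarrow> ((nat \<Rightarrow> nat) \<Rightarrow> real)
    \<Rightarrow> ((nat \<Rightarrow> nat) \<Rightarrow> real) \<Rightarrow> real" where
  "tinner d B f g = (\<Sum>i\<in>bidx d B. f i * g i)"

definition refines :: "nat set set \<Rightarrow> nat set set \<Rightarrow> bool" where
  "refines \<pi>1 \<pi>2 \<longleftrightarrow> (\<forall>B1\<in>\<pi>1. \<exists>B2\<in>\<pi>2. B1 \<subseteq> B2)"

text \<open>A decomposition A = sum_{n<r} lam n * a n 0 (x) ... (x) a n (k-1) as in the
definition of pi-OD (lam 0 corresponds to lambda_1).\<close>
definition is_piOD_decomp :: "nat \<Rightarrow> (nat \<Rightarrow> nat) \<Rightarrow> nat set set \<Rightarrow> ((nat \<Rightarrow> nat) \<Rightarrow> real)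
    \<Rightarrow> nat \<Rightarrow> (nat \<Rightarrow> real) \<Rightarrow> (nat \<Rightarrow> nat \<Rightarrow> nat \<Rightarrow> real) \<Rightarrow> bool" where
  "is_piOD_decomp k d \<pi> A r lam a \<longleftrightarrow>
     (\<forall>n m. n \<le> m \<longrightarrow> m < r \<longrightarrow> lam m \<le> lam n) \<and>
     (\<forall>n<r. 0 \<le> lam n) \<and>
     (\<forall>i\<in>tidx k d. A i = (\<Sum>n<r. lam n * (\<Prod>j<k. a n j (i j)))) \<and>
     (\<forall>B\<in>\<pi>. \<forall>n<r. \<forall>m<r.
        tinner d B (tprod (a n) B) (tprod (a m) B) = (if n = m then 1 else 0))"

definition piOD :: "nat \<Rightarrow> (nat \<Rightarrow> nat) \<Rightarrow> nat set set \<Rightarrow> ((nat \<Rightarrow> nat) \<Rightarrow> real) \<Rightarrow> bool" where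
  "piOD k d \<pi> A \<longleftrightarrow> (\<exists>r lam a. is_piOD_decomp k d \<pi> A r lam a)"

definition spectral_norm :: "nat \<Rightarrow> (nat \<Rightarrow> nat) \<Rightarrow> ((nat \<Rightarrow> nat) \<Rightarrow> real) \<Rightarrow> real" where
  "spectral_norm m e T = Sup {(\<Sum>i\<in>tidx m e. T i * (\<Prod>j<m. x j (i j))) | x.
       \<forall>j<m. (\<Sum>t<e j. (x j t)\<^sup>2) = 1}"

text \<open>Unfolding: a fixed enumeration B_0, ..., B_(l-1) of the blocks and, for each block,
a fixed bijection from its index tuples onto {..< prod d B}.\<close>
definition blocks :: "nat set set \<Rightarrow> nat set list" where
  "blocks \<pi> = (SOME bs. distinct bs \<and> set bs = \<pi>)"

definition benc :: "(nat \<Rightarrow> nat) \<Rightarrow> nat set \<Rightarrow> (nat \<Rightarrow> nat) \<Rightarrow> nat" where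
  "benc d B = (SOME f. bij_betw f (bidx d B) {..<(\<Prod>j\<in>B. d j)})"

definition unfold_dims :: "(nat \<Rightarrow> nat) \<Rightarrow> nat set set \<Rightarrow> nat \<Rightarrow> nat" where
  "unfold_dims d \<pi> j = (\<Prod>r\<in>blocks \<pi> ! j. d r)"

definition Unfold :: "nat \<Rightarrow> (nat \<Rightarrow> nat) \<Rightarrow> nat set set \<Rightarrow> ((nat \<Rightarrow> nat) \<Rightarrow> real)
    \<Rightarrow> (nat \<Rightarrow> nat) \<Rightarrow> real" where
  "Unfold k d \<pi> A = (\<lambda>m. A (\<lambda>r. if r < k then
      (let bs = blocks \<pi>; j = (THE j. j < length bs \<and> r \<in> bs ! j)
       in inv_into (bidx d (bs ! j)) (benc d (bs ! j)) (m j) r)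
    else undefined))"

end

theory Submission
  imports Defs
begin


lemma tinner_tprod:
  assumes "finite B"
  shows "tinner d B (tprod u B) (tprod w B) = (\<Prod>j\<in>B. \<Sum>t<d j. u j t * w j t)"
proof -
  have "tinner d B (tprod u B) (tprod w B) = (\<Sum>i\<in>bidx d B. \<Prod>j\<in>B. u j (i j) * w j (i j))"
    unfolding tinner_def tprod_def by (simp add: prod.distrib)
  also have "\<dots> = (\<Prod>j\<in>B. \<Sum>t<d j. u j t * w j t)"
    unfolding bidx_def by (rule prod_sum_PiE[symmetric]) (use assms in auto)
  finally show ?thesis .
qed

lemma part_a:
  assumes p1: "partition_on {..<k} \<pi>1" and p2: "partition_on {..<k} \<pi>2"
    and ref: "refines \<pi>1 \<pi>2" and D: "is_piOD_decomp k d \<pi>1 A r lam a"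
  shows "is_piOD_decomp k d \<pi>2 A r lam a"
proof -
  have fin1: "finite \<pi>1" using p1 finite_elements by blast
  have "tinner d B2 (tprod (a n) B2) (tprod (a m) B2) = (if n = m then 1 else 0)"
    if B2: "B2 \<in> \<pi>2" and n: "n < r" and m: "m < r" for B2 n m
  proof -
    define C where "C = {B\<in>\<pi>1. B \<subseteq> B2}"
    have sub: "B2 \<subseteq> {..<k}" using p2 B2 partition_onD1 by blast
    have U: "\<Union>C = B2"
    proof
      show "\<Union>C \<subseteq> B2" unfolding C_def by blast
      show "B2 \<subseteq> \<Union>C"
      proof
        fix x assume x: "x \<in> B2"
        then obtain B1 where B1: "B1 \<in> \<pi>1" "x \<in> B1" using sub p1 partition_onD1 by blast
        then obtain B2' where B2': "B2' \<in> \<pi>2" "B1 \<subseteq> B2'" using ref unfolding refines_def by blast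
        have "B2' = B2"
          using partition_onD2[OF p2] B2' B2 x B1 unfolding pairwise_def disjnt_def by blast
        thus "x \<in> \<Union>C" using B1 B2' unfolding C_def by blast
      qed
    qed
    have ne: "C \<noteq> {}" using U B2 partition_onD3[OF p2] by auto
    have finC: "finite C" using fin1 unfolding C_def by simp
    have finB2: "finite B2" by (rule finite_subset[OF sub]) simp
    have finB: "\<forall>B\<in>C. finite B" 
    proof
      fix B assume "B \<in> C"
      hence "B \<subseteq> B2" unfolding C_def by simp
      thus "finite B" using finB2 by (rule finite_subset)
    qed
    have dj: "\<forall>A\<in>C. \<forall>B\<in>C. A \<noteq> B \<longrightarrow> A \<inter> B = {}"
      using partition_onD2[OF p1] unfolding C_def pairwise_def disjnt_def by blast
    have "tinner d B2 (tprod (a n) B2) (tprod (a m) B2) = (\<Prod>j\<in>\<Union>C. \<Sum>t<d j. a n j t * a m j t)"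
      using tinner_tprod[OF finB2] U by simp
    also have "\<dots> = (\<Prod>B\<in>C. \<Prod>j\<in>B. \<Sum>t<d j. a n j t * a m j t)"
      using prod.Union_disjoint[OF finB dj] by simp
    also have "\<dots> = (\<Prod>B\<in>C. (if n = m then 1 else 0))"
    proof (rule prod.cong[OF refl])
      fix B assume "B \<in> C"
      hence "B \<in> \<pi>1" "finite B" using finB unfolding C_def by auto
      thus "(\<Prod>j\<in>B. \<Sum>t<d j. a n j t * a m j t) = (if n = m then 1 else 0)"
        using D n m tinner_tprod[of B d "a n" "a m"] unfolding is_piOD_decomp_def by auto
    qed
    also have "\<dots> = (if n = m then 1 else 0)" using ne finC by auto
    finally show ?thesis .
  qed
  thus ?thesis using D unfolding is_piOD_decomp_def by blast
qed



lemma bessel: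
  fixes u :: "nat \<Rightarrow> nat \<Rightarrow> real" and x :: "nat \<Rightarrow> real"
  assumes orth: "\<And>n m. n < r \<Longrightarrow> m < r \<Longrightarrow> (\<Sum>t<N. u n t * u m t) = (if n = m then 1 else 0)"
  shows "(\<Sum>n<r. (\<Sum>t<N. u n t * x t)\<^sup>2) \<le> (\<Sum>t<N. (x t)\<^sup>2)"
proof -
  define c where "c n = (\<Sum>t<N. u n t * x t)" for n
  define s where "s t = (\<Sum>n<r. c n * u n t)" for t
  have e1: "(\<Sum>t<N. (x t - s t)\<^sup>2) = (\<Sum>t<N. (x t)\<^sup>2) - 2 * (\<Sum>t<N. x t * s t) + (\<Sum>t<N. s t * s t)"
    by (simp add: power2_eq_square algebra_simps sum.distrib sum_subtractf sum_distrib_left)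
  have e2: "(\<Sum>t<N. x t * s t) = (\<Sum>n<r. c n * c n)"
  proof -
    have "(\<Sum>t<N. x t * s t) = (\<Sum>t<N. \<Sum>n<r. c n * (u n t * x t))"
      unfolding s_def by (simp add: sum_distrib_left algebra_simps)
    also have "\<dots> = (\<Sum>n<r. \<Sum>t<N. c n * (u n t * x t))" by (rule sum.swap)
    also have "\<dots> = (\<Sum>n<r. c n * c n)" unfolding c_def by (simp add: sum_distrib_left)
    finally show ?thesis .
  qed
  have e3: "(\<Sum>t<N. s t * s t) = (\<Sum>n<r. c n * c n)"
  proof -
    have "(\<Sum>t<N. s t * s t) = (\<Sum>t<N. \<Sum>n<r. \<Sum>m<r. c n * c m * (u n t * u m t))"
      unfolding s_def by (simp add: sum_product algebra_simps)
    also have "\<dots> = (\<Sum>n<r. \<Sum>t<N. \<Sum>m<r. c n * c m * (u n t * u m t))" by (rule sum.swap)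
    also have "\<dots> = (\<Sum>n<r. \<Sum>m<r. \<Sum>t<N. c n * c m * (u n t * u m t))"
      by (rule sum.cong[OF refl], rule sum.swap)
    also have "\<dots> = (\<Sum>n<r. \<Sum>m<r. c n * c m * (if n = m then 1 else 0))"
      by (intro sum.cong refl) (simp add: orth flip: sum_distrib_left)
    also have "\<dots> = (\<Sum>n<r. \<Sum>m<r. if n = m then c n * c n else 0)"
      by (intro sum.cong refl) auto
    also have "\<dots> = (\<Sum>n<r. c n * c n)"
      by (simp add: sum.delta)
    finally show ?thesis .
  qed
  have "0 \<le> (\<Sum>t<N. (x t - s t)\<^sup>2)" by (simp add: sum_nonneg)
  hence "(\<Sum>n<r. c n * c n) \<le> (\<Sum>t<N. (x t)\<^sup>2)" using e1 e2 e3 by linarith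
  thus ?thesis unfolding c_def by (simp add: power2_eq_square)
qed

lemma core:
  fixes U :: "nat \<Rightarrow> nat \<Rightarrow> nat \<Rightarrow> real" and lam :: "nat \<Rightarrow> real"
  assumes l2: "2 \<le> l" and r1: "1 \<le> r"
    and mono: "\<And>n. n < r \<Longrightarrow> lam n \<le> lam 0"
    and nn: "\<And>n. n < r \<Longrightarrow> 0 \<le> lam n"
    and orth: "\<And>j n m. j < l \<Longrightarrow> n < r \<Longrightarrow> m < r \<Longrightarrow>
        (\<Sum>t<e j. U n j t * U m j t) = (if n = m then 1 else 0)"
  shows "Sup {(\<Sum>n<r. lam n * (\<Prod>j<l. \<Sum>t<e j. U n j t * x j t)) | x.
       \<forall>j<l. (\<Sum>t<e j. (x j t)\<^sup>2) = 1} = lam 0"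
proof (rule cSup_eq_maximum)
  let ?x = "\<lambda>j. U 0 j"
  have unit: "\<forall>j<l. (\<Sum>t<e j. (?x j t)\<^sup>2) = 1"
    using orth[of _ 0 0] r1 by (simp add: power2_eq_square)
  have "(\<Sum>n<r. lam n * (\<Prod>j<l. \<Sum>t<e j. U n j t * ?x j t)) = (\<Sum>n<r. lam n * (if n = 0 then 1 else 0))"
  proof (intro sum.cong refl)
    fix n assume n: "n \<in> {..<r}"
    have "(\<Prod>j<l. \<Sum>t<e j. U n j t * ?x j t) = (\<Prod>j<l. (if n = 0 then 1 else 0))"
      using orth[of _ n 0] n r1 by (intro prod.cong refl) auto
    also have "\<dots> = (if n = 0 then 1 else 0)" using l2 by auto
    finally show "lam n * (\<Prod>j<l. \<Sum>t<e j. U n j t * ?x j t) = lam n * (if n = 0 then 1 else 0)" by simp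
  qed
  also have "\<dots> = (\<Sum>n<r. if n = 0 then lam n else 0)"
    by (intro sum.cong refl) auto
  also have "\<dots> = lam 0" using r1 by (simp add: sum.delta')
  finally show "lam 0 \<in> {(\<Sum>n<r. lam n * (\<Prod>j<l. \<Sum>t<e j. U n j t * x j t)) | x.
       \<forall>j<l. (\<Sum>t<e j. (x j t)\<^sup>2) = 1}" using unit by force
next
  fix y assume "y \<in> {(\<Sum>n<r. lam n * (\<Prod>j<l. \<Sum>t<e j. U n j t * x j t)) | x.
       \<forall>j<l. (\<Sum>t<e j. (x j t)\<^sup>2) = 1}"
  then obtain x where y: "y = (\<Sum>n<r. lam n * (\<Prod>j<l. \<Sum>t<e j. U n j t * x j t))"
    and unit: "\<forall>j<l. (\<Sum>t<e j. (x j t)\<^sup>2) = 1" by blast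
  define c where "c n j = (\<Sum>t<e j. U n j t * x j t)" for n j
  have bes: "(\<Sum>n<r. (c n j)\<^sup>2) \<le> 1" if j: "j < l" for j
    using bessel[where r=r and N="e j" and u="\<lambda>n. U n j" and x="x j"] orth[OF j] unit j unfolding c_def by auto
  have cle: "\<bar>c n j\<bar> \<le> 1" if "j < l" "n < r" for j n
  proof -
    have "(c n j)\<^sup>2 \<le> (\<Sum>n<r. (c n j)\<^sup>2)"
      using that by (intro member_le_sum) auto
    hence "(c n j)\<^sup>2 \<le> 1" using bes[OF that(1)] by linarith
    thus ?thesis by (simp add: abs_square_le_1)
  qed
  have step: "lam n * (\<Prod>j<l. c n j) \<le> lam 0 * (((c n 0)\<^sup>2 + (c n 1)\<^sup>2) / 2)" if n: "n < r" for n
  proof -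
    have "(\<Prod>j<l. c n j) \<le> \<bar>\<Prod>j<l. c n j\<bar>" by simp
    also have "\<dots> = (\<Prod>j<l. \<bar>c n j\<bar>)" by (simp add: abs_prod)
    also have "{..<l} = insert 0 (insert 1 {2..<l})" using l2 by auto
    hence "(\<Prod>j<l. \<bar>c n j\<bar>) = \<bar>c n 0\<bar> * (\<bar>c n 1\<bar> * (\<Prod>j\<in>{2..<l}. \<bar>c n j\<bar>))" by simp
    also have "\<dots> \<le> \<bar>c n 0\<bar> * (\<bar>c n 1\<bar> * 1)"
      using cle n by (intro mult_left_mono prod_le_1) auto
    also have "\<dots> \<le> ((c n 0)\<^sup>2 + (c n 1)\<^sup>2) / 2"
    proof -
      have "0 \<le> (\<bar>c n 0\<bar> - \<bar>c n 1\<bar>)\<^sup>2" by simp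
      thus ?thesis by (simp add: power2_eq_square algebra_simps)
    qed
    finally have P: "(\<Prod>j<l. c n j) \<le> ((c n 0)\<^sup>2 + (c n 1)\<^sup>2) / 2" .
    have "lam n * (\<Prod>j<l. c n j) \<le> lam n * (((c n 0)\<^sup>2 + (c n 1)\<^sup>2) / 2)"
      using P nn[OF n] by (rule mult_left_mono)
    also have "\<dots> \<le> lam 0 * (((c n 0)\<^sup>2 + (c n 1)\<^sup>2) / 2)"
      using mono[OF n] by (intro mult_right_mono) auto
    finally show ?thesis .
  qed
  have "y = (\<Sum>n<r. lam n * (\<Prod>j<l. c n j))" unfolding y c_def ..
  also have "\<dots> \<le> (\<Sum>n<r. lam 0 * (((c n 0)\<^sup>2 + (c n 1)\<^sup>2) / 2))"
    using step by (intro sum_mono) auto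
  also have "\<dots> = lam 0 * (((\<Sum>n<r. (c n 0)\<^sup>2) + (\<Sum>n<r. (c n 1)\<^sup>2)) / 2)"
    by (simp add: sum_distrib_left sum.distrib sum_divide_distrib distrib_left flip: sum_divide_distrib)
  also have "\<dots> \<le> lam 0 * 1"
    using bes[of 0] bes[of 1] l2 nn[of 0] r1 by (intro mult_left_mono) auto
  finally show "y \<le> lam 0" by simp
qed



lemma part_b:
  assumes k1: "1 \<le> k" and p: "partition_on {..<k} \<pi>" and ne: "\<pi> \<noteq> {{..<k}}"
    and D: "is_piOD_decomp k d \<pi> A r lam a" and r1: "1 \<le> r"
  shows "spectral_norm (card \<pi>) (unfold_dims d \<pi>) (Unfold k d \<pi> A) = lam 0"
proof -
  have finpi: "finite \<pi>" using p finite_elements by blast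
  define bs where "bs = blocks \<pi>"
  have bs: "distinct bs \<and> set bs = \<pi>"
    unfolding bs_def blocks_def by (rule someI_ex) (use finite_distinct_list[OF finpi] in auto)
  define l where "l = length bs"
  have lcard: "card \<pi> = l" unfolding l_def using bs distinct_card by fastforce
  have Un: "\<Union>\<pi> = {..<k}" using partition_onD1[OF p] by simp
  have l2: "2 \<le> l"
  proof (rule ccontr)
    assume "\<not> 2 \<le> l"
    hence "card \<pi> \<le> 1" using lcard by simp
    moreover have "\<pi> \<noteq> {}"
    proof
      assume "\<pi> = {}"
      hence "{..<k} = {}" using Un by simp
      thus False using k1 by (simp add: lessThan_empty_iff)
    qed
    ultimately obtain B where "\<pi> = {B}" using finpi
      by (metis card_0_eq card_1_singletonE le_eq_less_or_eq less_one)
    hence "\<pi> = {{..<k}}" using Un by auto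
    thus False using ne by simp
  qed
  have blk: "bs ! j \<in> \<pi>" if "j < l" for j using bs that unfolding l_def by auto
  have blksub: "bs ! j \<subseteq> {..<k}" if "j < l" for j using blk[OF that] Un by blast
  have blkfin: "finite (bs ! j)" if "j < l" for j by (rule finite_subset[OF blksub[OF that]]) simp
  have djp: "B1 = B2" if "B1 \<in> \<pi>" "B2 \<in> \<pi>" "x \<in> B1" "x \<in> B2" for B1 B2 x
    using partition_onD2[OF p] that unfolding pairwise_def disjnt_def by blast
  have uniq: "j = j'" if "j < l" "j' < l" "x \<in> bs ! j" "x \<in> bs ! j'" for j j' x
  proof -
    have "bs ! j = bs ! j'" using djp[OF blk[OF that(1)] blk[OF that(2)] that(3,4)] .
    thus ?thesis using nth_eq_iff_index_eq[of bs j j'] bs that(1,2) unfolding l_def by simp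
  qed
  define J where "J x = (THE j. j < length bs \<and> x \<in> bs ! j)" for x
  have Jp: "J x < l \<and> x \<in> bs ! J x" if "x < k" for x
  proof -
    have "x \<in> \<Union>\<pi>" using Un that by simp
    then obtain B where B: "B \<in> \<pi>" "x \<in> B" by blast
    hence "B \<in> set bs" using bs by simp
    then obtain j where j0: "j < length bs" "bs ! j = B" by (auto simp: in_set_conv_nth)
    have j: "j < l" "x \<in> bs ! j" using j0 B unfolding l_def by auto
    have "J x = j" unfolding J_def
    proof (rule the_equality)
      show "j < length bs \<and> x \<in> bs ! j" using j unfolding l_def by simp
      fix j' assume "j' < length bs \<and> x \<in> bs ! j'"
      thus "j' = j" using uniq[of j' j x] j unfolding l_def by simp
    qed
    thus ?thesis using j by simp
  qed
  have Jeq: "J x = j" if "j < l" "x \<in> bs ! j" for j x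
  proof -
    have "x < k" using blksub[OF that(1)] that(2) by auto
    thus ?thesis using Jp uniq that by blast
  qed
  define e where "e = unfold_dims d \<pi>"
  have e: "e j = (\<Prod>r\<in>bs ! j. d r)" for j unfolding e_def unfold_dims_def bs_def ..
  have benc: "bij_betw (benc d B) (bidx d B) {..<(\<Prod>j\<in>B. d j)}" if "B \<in> \<pi>" for B
  proof -
    have "B \<subseteq> {..<k}" using that Un by blast
    hence fB: "finite B" by (rule finite_subset) simp
    have "finite (bidx d B)" unfolding bidx_def using fB by (intro finite_PiE) auto
    moreover have "card (bidx d B) = (\<Prod>j\<in>B. d j)" unfolding bidx_def using fB by (simp add: card_PiE)
    ultimately have "\<exists>f. bij_betw f (bidx d B) {..<(\<Prod>j\<in>B. d j)}"
      using ex_bij_betw_finite_nat[of "bidx d B"] by (simp add: atLeast0LessThan)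
    thus ?thesis unfolding benc_def by (rule someI_ex)
  qed
  define g where "g j = inv_into (bidx d (bs ! j)) (benc d (bs ! j))" for j
  have gbij: "bij_betw (g j) {..<e j} (bidx d (bs ! j))" if "j < l" for j
    unfolding g_def e using benc[OF blk[OF that]] by (rule bij_betw_inv_into)
  define U where "U n j t = tprod (a n) (bs ! j) (g j t)" for n j t
  have orth: "(\<Sum>t<e j. U n j t * U m j t) = (if n = m then 1 else 0)"
    if "j < l" "n < r" "m < r" for j n m
  proof -
    have "(\<Sum>t<e j. U n j t * U m j t) = (\<Sum>i\<in>bidx d (bs ! j). tprod (a n) (bs ! j) i * tprod (a m) (bs ! j) i)"
      unfolding U_def by (rule sum.reindex_bij_betw[OF gbij[OF that(1)]])
    also have "\<dots> = tinner d (bs ! j) (tprod (a n) (bs ! j)) (tprod (a m) (bs ! j))"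
      unfolding tinner_def ..
    also have "\<dots> = (if n = m then 1 else 0)" using D blk[OF that(1)] that(2,3)
      unfolding is_piOD_decomp_def by blast
    finally show ?thesis .
  qed
  have T: "Unfold k d \<pi> A m = (\<Sum>n<r. lam n * (\<Prod>j<l. U n j (m j)))" if m: "m \<in> tidx l e" for m
  proof -
    define I where "I = (\<lambda>x. if x < k then g (J x) (m (J x)) x else undefined)"
    have UI: "Unfold k d \<pi> A m = A I"
      unfolding Unfold_def I_def g_def J_def bs_def Let_def by (rule refl)
    have Iv: "I x = g j (m j) x" if "j < l" "x \<in> bs ! j" for j x
      using that Jeq[OF that] blksub[OF that(1)] unfolding I_def by auto
    have gm: "g j (m j) \<in> bidx d (bs ! j)" if "j < l" for j
      using gbij[OF that] m that unfolding tidx_def bij_betw_def by (auto simp: PiE_iff)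
    have Iin: "I \<in> tidx k d"
      unfolding tidx_def PiE_iff
    proof (intro conjI ballI)
      fix x assume "x \<in> {..<k}"
      hence x: "x < k" by simp
      have "I x = g (J x) (m (J x)) x" using x unfolding I_def by simp
      thus "I x \<in> {..<d x}" using gm[of "J x"] Jp[OF x] unfolding bidx_def by (auto simp: PiE_iff)
    next
      show "I \<in> extensional {..<k}" unfolding I_def extensional_def by auto
    qed
    have "A I = (\<Sum>n<r. lam n * (\<Prod>x<k. a n x (I x)))" using D Iin unfolding is_piOD_decomp_def by blast
    also have "\<dots> = (\<Sum>n<r. lam n * (\<Prod>j<l. U n j (m j)))"
    proof (intro sum.cong refl arg_cong2[where f="(*)"])
      fix n
      have kU: "{..<k} = (\<Union>j\<in>{..<l}. bs ! j)" using Jp blksub by blast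
      have "(\<Prod>x<k. a n x (I x)) = (\<Prod>j<l. \<Prod>x\<in>bs ! j. a n x (I x))"
        unfolding kU by (rule prod.UNION_disjoint) (use blkfin uniq in auto)
      also have "\<dots> = (\<Prod>j<l. U n j (m j))"
        unfolding U_def tprod_def by (intro prod.cong refl) (simp add: Iv)
      finally show "(\<Prod>x<k. a n x (I x)) = (\<Prod>j<l. U n j (m j))" .
    qed
    finally show ?thesis using UI by simp
  qed
  have S: "(\<Sum>m\<in>tidx l e. Unfold k d \<pi> A m * (\<Prod>j<l. x j (m j))) =
      (\<Sum>n<r. lam n * (\<Prod>j<l. \<Sum>t<e j. U n j t * x j t))" for x
  proof -
    have "(\<Sum>m\<in>tidx l e. Unfold k d \<pi> A m * (\<Prod>j<l. x j (m j))) =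
        (\<Sum>m\<in>tidx l e. \<Sum>n<r. lam n * (\<Prod>j<l. U n j (m j) * x j (m j)))"
      by (intro sum.cong refl) (simp add: T sum_distrib_right prod.distrib mult.assoc)
    also have "\<dots> = (\<Sum>n<r. lam n * (\<Sum>m\<in>tidx l e. \<Prod>j<l. U n j (m j) * x j (m j)))"
      by (subst sum.swap) (simp add: sum_distrib_left)
    also have "\<dots> = (\<Sum>n<r. lam n * (\<Prod>j<l. \<Sum>t<e j. U n j t * x j t))"
      unfolding tidx_def by (intro sum.cong refl arg_cong2[where f="(*)"]) (simp add: prod_sum_PiE)
    finally show ?thesis .
  qed
  have "spectral_norm (card \<pi>) (unfold_dims d \<pi>) (Unfold k d \<pi> A) =
     Sup {(\<Sum>n<r. lam n * (\<Prod>j<l. \<Sum>t<e j. U n j t * x j t)) | x.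
       \<forall>j<l. (\<Sum>t<e j. (x j t)\<^sup>2) = 1}"
    unfolding spectral_norm_def lcard e_def[symmetric] S ..
  also have "\<dots> = lam 0"
    by (rule core[OF l2 r1]) (use D orth in \<open>auto simp: is_piOD_decomp_def\<close>)
  finally show ?thesis .
qed


theorem lemma5p3:
  fixes k :: nat and d :: "nat \<Rightarrow> nat" and A :: "(nat \<Rightarrow> nat) \<Rightarrow> real"
  shows "(\<forall>\<pi>1 \<pi>2. partition_on {..<k} \<pi>1 \<longrightarrow> partition_on {..<k} \<pi>2 \<longrightarrow>
            refines \<pi>1 \<pi>2 \<longrightarrow> piOD k d \<pi>1 A \<longrightarrow> piOD k d \<pi>2 A)
       \<and> (\<forall>\<pi> r lam a. 1 \<le> k \<longrightarrow> partition_on {..<k} \<pi> \<longrightarrow> \<pi> \<noteq> {{..<k}} \<longrightarrow>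
            is_piOD_decomp k d \<pi> A r lam a \<longrightarrow> 1 \<le> r \<longrightarrow>
            spectral_norm (card \<pi>) (unfold_dims d \<pi>) (Unfold k d \<pi> A) = lam 0)"
  using part_a part_b unfolding piOD_def by blast

end
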